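(* Let $h$ be the Hahn sequence space and let $\Delta:h\to h$ be the forward difference operator $(\Delta x)_k=x_k-x_{k+1}$. Then $C_1\sigma(\Delta,h)=\emptyset$, and every $\alpha\in\sigma_r(\Delta,h)$ belongs to $C_2\sigma(\Delta,h)$.
   Context: Sequences are indexed by $\mathbb{N}=\{0,1,2,\dots\}$. The Hahn sequence space is $h=\{x=(x_k):\sum_{k=1}^\infty k|x_k-x_{k+1}|<\infty \text{ and } \lim_{k\to\infty}x_k=0\}$, a Banach space with norm $\|x\|_h=\sum_k k|x_k-x_{k+1}|+\sup_k|x_k|$. $\Delta$ is given by the matrix with $1$ on the main diagonal and $-1$ on the first superdiagonal. The residual spectrum $\sigma_r(T,X)$ of a bounded operator $T$ on a Banach space $X$ is the set of $\alpha$ such that $\alpha I-T$ is injective but has non-dense range. Goldberg's classification: for a bounded operator $S$ on $X$, state (C) means $\overline{R(S)}\ne X$; state (1) means $S^{-1}$ exists and is continuous, (2) means $S^{-1}$ exists but is discontinuous. $C_j\sigma(T,X)$ is the set of $\alpha\in\mathbb{C}$ such that $\alpha I-T$ is in state $C_j$. *)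

theory Defs
  imports Complex_Main
begin

definition hahn :: "(nat \<Rightarrow> complex) set" where
  "hahn = {x. summable (\<lambda>k. real k * norm (x k - x (Suc k))) \<and> x \<longlonglongrightarrow> 0}"

definition hahn_norm :: "(nat \<Rightarrow> complex) \<Rightarrow> real" where
  "hahn_norm x = (\<Sum>k. real k * norm (x k - x (Suc k))) + (SUP k. norm (x k))"

definition Delta :: "(nat \<Rightarrow> complex) \<Rightarrow> (nat \<Rightarrow> complex)" where
  "Delta x = (\<lambda>k. x k - x (Suc k))"

definition shifted :: "complex \<Rightarrow> (nat \<Rightarrow> complex) \<Rightarrow> (nat \<Rightarrow> complex)" where
  "shifted \<alpha> x = (\<lambda>k. \<alpha> * x k - Delta x k)"

definition dense_range_h :: "((nat \<Rightarrow> complex) \<Rightarrow> (nat \<Rightarrow> complex)) \<Rightarrow> bool" where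
  "dense_range_h S \<longleftrightarrow>
     (\<forall>x\<in>hahn. \<forall>\<epsilon>>0. \<exists>y\<in>S ` hahn. hahn_norm (x - y) < \<epsilon>)"

definition inverse_continuous_h :: "((nat \<Rightarrow> complex) \<Rightarrow> (nat \<Rightarrow> complex)) \<Rightarrow> bool" where
  "inverse_continuous_h S \<longleftrightarrow>
     (\<forall>y0\<in>S ` hahn. \<forall>\<epsilon>>0. \<exists>\<delta>>0. \<forall>y\<in>S ` hahn.
        hahn_norm (y - y0) < \<delta> \<longrightarrow>
        hahn_norm (the_inv_into hahn S y - the_inv_into hahn S y0) < \<epsilon>)"

definition residual_spectrum_Delta_h :: "complex set" where
  "residual_spectrum_Delta_h =
     {\<alpha>. inj_on (shifted \<alpha>) hahn \<and> \<not> dense_range_h (shifted \<alpha>)}"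

definition C1_spectrum_Delta_h :: "complex set" where
  "C1_spectrum_Delta_h =
     {\<alpha>. \<not> dense_range_h (shifted \<alpha>) \<and> inj_on (shifted \<alpha>) hahn
          \<and> inverse_continuous_h (shifted \<alpha>)}"

definition C2_spectrum_Delta_h :: "complex set" where
  "C2_spectrum_Delta_h =
     {\<alpha>. \<not> dense_range_h (shifted \<alpha>) \<and> inj_on (shifted \<alpha>) hahn
          \<and> \<not> inverse_continuous_h (shifted \<alpha>)}"

end

theory Submission
  imports Defs
begin

lemma shifted_add: "shifted a (\<lambda>k. u k + v k) = (\<lambda>k. shifted a u k + shifted a v k)"
  by (auto simp: shifted_def Delta_def fun_eq_iff algebra_simps)

lemma finite_in_range:
  assumes "a \<noteq> 1"
  shows "\<forall>y. (\<forall>k>N. y k = 0) \<longrightarrow> (\<exists>z. (\<forall>k>N. z k = 0) \<and> shifted a z = y)"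
proof (induction N)
  have b: "a - 1 \<noteq> 0" using assms by simp
  case 0
  show ?case
  proof (intro allI impI)
    fix y :: "nat \<Rightarrow> complex" assume y: "\<forall>k>0. y k = 0"
    define z where "z = (\<lambda>k::nat. if k = 0 then y 0 / (a - 1) else 0)"
    have c: "(a - 1) * (y 0 / (a - 1)) = y 0" using b by simp
    have "shifted a z = y"
      unfolding fun_eq_iff shifted_def Delta_def z_def
    proof
      fix k show "a * (if k = 0 then y 0 / (a - 1) else 0) -
          ((if k = 0 then y 0 / (a - 1) else 0) - (if Suc k = 0 then y 0 / (a - 1) else 0)) = y k"
      proof (cases k)
        case 0
        have c2: "a * (y 0/(a-1)) - y 0/(a-1) = y 0" using c by (simp only: left_diff_distrib mult_1)
        have i1: "(if k = 0 then y 0/(a-1) else 0) = y 0/(a-1)" and i2: "(if Suc k = 0 then y 0/(a-1) else 0) = 0"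
          using 0 by auto
        show ?thesis unfolding i1 i2 using c2 0 by (simp only: diff_zero)
      next
        case (Suc m)
        have "y k = 0" using y Suc by simp
        then show ?thesis using Suc by simp
      qed
    qed
    moreover have "\<forall>k>0. z k = 0" by (simp add: z_def)
    ultimately have "(\<forall>k>0. z k = 0) \<and> shifted a z = y" by simp
    then show "\<exists>z. (\<forall>k>0. z k = 0) \<and> shifted a z = y" by (rule exI[of _ z])
  qed
next
  have b: "a - 1 \<noteq> 0" using assms by simp
  case (Suc N)
  show ?case
  proof (intro allI impI)
    fix y :: "nat \<Rightarrow> complex" assume y: "\<forall>k>Suc N. y k = 0"
    define c where "c = y (Suc N) / (a - 1)"
    define e where "e = (\<lambda>k. if k = Suc N then c else 0)"
    have se: "shifted a e = (\<lambda>k. if k = Suc N then y (Suc N) else if k = N then c else 0)"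
    proof -
      have c1: "(a - 1) * c = y (Suc N)" using b unfolding c_def by simp
      have cc: "a * c - c = y (Suc N)" using c1 by (simp only: left_diff_distrib mult_1)
      show ?thesis unfolding fun_eq_iff shifted_def Delta_def e_def
      proof
        fix k
        show "a * (if k = Suc N then c else 0) - ((if k = Suc N then c else 0) - (if Suc k = Suc N then c else 0)) =
          (if k = Suc N then y (Suc N) else if k = N then c else 0)"
        proof (cases "k = Suc N")
          case True then show ?thesis using cc by simp
        next
          case False
          show ?thesis
          proof (cases "k = N")
            case True then show ?thesis by simp
          next
            case F2: False then show ?thesis using False by simp
          qed
        qed
      qed
    qed
    define y' where "y' = y - shifted a e"
    have "\<forall>k>N. y' k = 0"
    proof (intro allI impI)
      fix k assume "k > N"
      then have "k = Suc N \<or> k > Suc N" by auto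
      then show "y' k = 0" using y unfolding y'_def se by auto
    qed
    then obtain z' where z': "\<forall>k>N. z' k = 0" "shifted a z' = y'" using Suc.IH by blast
    have "shifted a (\<lambda>k. z' k + e k) = y" using z' shifted_add unfolding y'_def by (simp add: fun_eq_iff)
    moreover have "\<forall>k>Suc N. z' k + e k = 0" using z' unfolding e_def by auto
    ultimately have "(\<forall>k>Suc N. (\<lambda>k. z' k + e k) k = 0) \<and> shifted a (\<lambda>k. z' k + e k) = y" by simp
    then show "\<exists>z. (\<forall>k>Suc N. z k = 0) \<and> shifted a z = y" by (rule exI[of _ "\<lambda>k. z' k + e k"])
  qed
qed

lemma fin_hahn: assumes "\<forall>k>N. z k = 0" shows "z \<in> hahn"
proof -
  have "summable (\<lambda>k. real k * norm (z k - z (Suc k)))"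
    by (rule summable_finite[of "{..N}"]) (use assms in auto)
  moreover have "z \<longlonglongrightarrow> 0"
    by (rule tendsto_eventually) (use assms in \<open>auto simp: eventually_sequentially intro: exI[of _ "Suc N"]\<close>)
  ultimately show ?thesis by (simp add: hahn_def)
qed

lemma tail_bound:
  assumes "x \<in> hahn" "n \<ge> 1"
  shows "real n * norm (x n) \<le> (\<Sum>i. real (i+n) * norm (x (i+n) - x (Suc (i+n))))"
proof -
  from assms have sf: "summable (\<lambda>k. real k * norm (x k - x (Suc k)))" and x0: "x \<longlonglongrightarrow> 0"
    by (auto simp: hahn_def)
  have sf2: "summable (\<lambda>i. real (i+n) * norm (x (i+n) - x (Suc (i+n))))"
    using summable_ignore_initial_segment[OF sf, of n] by simp
  have sg: "summable (\<lambda>i. norm (x (i+n) - x (Suc (i+n))))"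
  proof (rule summable_comparison_test[OF _ sf2])
    have "\<And>i. norm (x (i+n) - x (Suc (i+n))) \<le> real (i+n) * norm (x (i+n) - x (Suc (i+n)))"
    proof -
      fix i
      have h: "1 \<le> real (i+n)" using assms(2) by simp
      show "norm (x (i+n) - x (Suc (i+n))) \<le> real (i+n) * norm (x (i+n) - x (Suc (i+n)))"
        using mult_right_mono[OF h norm_ge_zero, of "x (i+n) - x (Suc (i+n))"] by simp
    qed
    then show "\<exists>N. \<forall>i\<ge>N. norm (norm (x (i + n) - x (Suc (i + n)))) \<le> real (i + n) * norm (x (i + n) - x (Suc (i + n)))"
      by auto
  qed
  have "(\<lambda>i. x (i+n)) \<longlonglongrightarrow> 0" using LIMSEQ_ignore_initial_segment[OF x0, of n] .
  then have "(\<lambda>i. x (i+n) - x (Suc i + n)) sums (x (0+n) - 0)" by (rule telescope_sums')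
  then have xn: "x n = (\<Sum>i. x (i+n) - x (Suc (i+n)))" by (simp add: sums_iff)
  have "norm (x n) \<le> (\<Sum>i. norm (x (i+n) - x (Suc (i+n))))"
    unfolding xn by (rule summable_norm[OF sg])
  then have "real n * norm (x n) \<le> real n * (\<Sum>i. norm (x (i+n) - x (Suc (i+n))))"
    by (simp add: mult_left_mono)
  also have "\<dots> = (\<Sum>i. real n * norm (x (i+n) - x (Suc (i+n))))"
    using suminf_mult[OF sg, of "real n"] by simp
  also have "\<dots> \<le> (\<Sum>i. real (i+n) * norm (x (i+n) - x (Suc (i+n))))"
    apply (rule suminf_le)
    subgoal by (simp add: mult_right_mono)
    subgoal by (rule summable_mult[OF sg])
    subgoal by (rule sf2)
    done
  finally show ?thesis .
qed

lemma dense_shifted: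
  assumes "a \<noteq> 1"
  shows "dense_range_h (shifted a)"
  unfolding dense_range_h_def
proof (intro ballI allI impI)
  fix x :: "nat \<Rightarrow> complex" and \<epsilon> :: real
  assume x: "x \<in> hahn" and e: "\<epsilon> > 0"
  define f where "f = (\<lambda>k. real k * norm (x k - x (Suc k)))"
  from x have sf: "summable f" and x0: "x \<longlonglongrightarrow> 0" by (auto simp: hahn_def f_def)
  obtain N1 where N1: "\<forall>n\<ge>N1. norm (\<Sum>i. f (i+n)) < \<epsilon>/4"
    using suminf_exist_split[OF _ sf, of "\<epsilon>/4"] e by auto
  obtain N0 where N0: "\<forall>n\<ge>N0. norm (x n - 0) < \<epsilon>/4"
    using x0 e unfolding LIMSEQ_iff by (meson divide_pos_pos zero_less_numeral)
  define N where "N = N0 + N1"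
  define y where "y = (\<lambda>k. if k \<le> N then x k else 0)"
  have ys: "\<forall>k>N. y k = 0" by (simp add: y_def)
  with finite_in_range[OF assms, of N] obtain z where z: "\<forall>k>N. z k = 0" "shifted a z = y"
    by blast
  have yr: "y \<in> shifted a ` hahn" using z fin_hahn by blast
  define d where "d = x - y"
  have dk: "\<And>k. d k = (if k \<le> N then 0 else x k)" unfolding d_def y_def by auto
  define g where "g = (\<lambda>k. real k * norm (d k - d (Suc k)))"
  have gs: "\<And>i. g (i + Suc N) = f (i + Suc N)" unfolding g_def f_def dk by auto
  have sg: "summable g"
    using summable_iff_shift[of g "Suc N"] summable_iff_shift[of f "Suc N"] sf gs by simp
  have "N1 \<le> Suc N" by (simp add: N_def)
  from N1[rule_format, OF this] have T: "(\<Sum>i. f (i + Suc N)) < \<epsilon>/4" by simp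
  have T2: "real (Suc N) * norm (x (Suc N)) \<le> (\<Sum>i. f (i + Suc N))"
    using tail_bound[OF x, of "Suc N"] unfolding f_def by simp
  have gsum: "sum g {..<Suc N} = real N * norm (x (Suc N))"
  proof -
    have "sum g {..<N} = 0" by (rule sum.neutral) (auto simp: g_def dk)
    then show ?thesis by (simp add: g_def dk)
  qed
  have "suminf g = (\<Sum>i. g (i + Suc N)) + sum g {..<Suc N}"
    by (rule suminf_split_initial_segment[OF sg])
  also have "\<dots> = (\<Sum>i. f (i + Suc N)) + real N * norm (x (Suc N))" using gs gsum by simp
  also have "\<dots> < \<epsilon>/4 + \<epsilon>/4"
  proof -
    have "real N * norm (x (Suc N)) \<le> real (Suc N) * norm (x (Suc N))"
      by (simp add: mult_right_mono)
    then show ?thesis using T T2 by linarith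
  qed
  finally have S1: "suminf g < \<epsilon>/2" by simp
  have S2: "(SUP k. norm (d k)) \<le> \<epsilon>/4"
  proof (rule cSUP_least)
    fix k
    show "norm (d k) \<le> \<epsilon>/4"
    proof (cases "k \<le> N")
      case True then show ?thesis using e by (simp add: dk)
    next
      case False then have "k \<ge> N0" using N_def by auto
      then show ?thesis using N0 False by (auto simp: dk less_imp_le)
    qed
  qed simp
  have hn: "hahn_norm d = suminf g + (SUP k. norm (d k))" unfolding hahn_norm_def g_def by (rule refl)
  have "hahn_norm d < \<epsilon>" unfolding hn using S1 S2 e by linarith
  then show "\<exists>y\<in>shifted a ` hahn. hahn_norm (x - y) < \<epsilon>" using yr d_def by blast
qed

lemma not_inj1: "\<not> inj_on (shifted 1) hahn"
proof
  assume inj: "inj_on (shifted 1) hahn"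
  define e0 :: "nat \<Rightarrow> complex" where "e0 = (\<lambda>k. if k = 0 then 1 else 0)"
  have h1: "e0 \<in> hahn" by (rule fin_hahn[of 0]) (simp add: e0_def)
  have h2: "(\<lambda>k. 0::complex) \<in> hahn" by (rule fin_hahn[of 0]) simp
  have "shifted 1 e0 = shifted 1 (\<lambda>k. 0)" by (simp add: shifted_def Delta_def e0_def fun_eq_iff)
  then have "e0 = (\<lambda>k. 0)" using inj h1 h2 by (meson inj_onD)
  from fun_cong[OF this, of 0] show False by (simp add: e0_def)
qed

lemma no_res: "inj_on (shifted a) hahn \<Longrightarrow> dense_range_h (shifted a)"
  using not_inj1 dense_shifted by (cases "a = 1") auto

theorem theorem4p8:
  shows "C1_spectrum_Delta_h = {} \<and> residual_spectrum_Delta_h \<subseteq> C2_spectrum_Delta_h"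
  using no_res unfolding C1_spectrum_Delta_h_def residual_spectrum_Delta_h_def by auto

end
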